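(* Let $\mathbf{u}$ be quasi-definite with SMOP $(P_n)$ satisfying $xP_n=P_{n+1}+b_nP_n+a_nP_{n-1}$, monic Jacobi matrix $J$, and let $c\in\mathbb{C}$ with $P_n(c)\ne0$ for all $n$. Set $\beta_n=-P_{n+1}(c)/P_n(c)$ ($n\ge0$) and $\ell_n=-a_nP_{n-1}(c)/P_n(c)$ ($n\ge1$), so that $J-cI=LU$ with $L$ lower bidiagonal (diagonal $1$, subdiagonal $\ell_1,\ell_2,\dots$) and $U$ upper bidiagonal (diagonal $\beta_0,\beta_1,\dots$, superdiagonal $1$). Let $J_\alpha$ be the monic Jacobi matrix of the polynomials $R_n(x)=\frac{\mathbf{u}_0}{\widetilde{\mathbf{u}}_0}[(x-c)P^{(1)}_n(x)-P_{n+1}(x)]$, where $\widetilde{\mathbf{u}}=(x-c)\mathbf{u}$, and let $\widetilde J^{(1)}$ be the monic Jacobi matrix of the associated polynomials of the first kind $(\widetilde P^{(1)}_n)$ of $\widetilde{\mathbf{u}}$. Let $L_1$ be the lower bidiagonal matrix with diagonal $1$ and subdiagonal $\ell_2,\ell_3,\dots$, and $U_1$ the upper bidiagonal matrix with diagonal $\beta_1,\beta_2,\dots$ and superdiagonal $1$ (i.e. $L_1=\Lambda L\Lambda^\top$, $U_1=\Lambda U\Lambda^\top$, $\Lambda$ the shift matrix with $\Lambda_{i,i+1}=1$ and zeros elsewhere). Then $$J_\alpha-cI=L_1U_1,\qquad \widetilde J^{(1)}-cI=U_1L_1.$$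
   Context: Quasi-definite: all leading principal Hankel minors of the moments nonzero; SMOP = sequence of monic orthogonal polynomials with $xP_n=P_{n+1}+b_nP_n+a_nP_{n-1}$, $P_{-1}=0,P_0=1$, $a_n\neq0$. The monic Jacobi matrix of a sequence satisfying such a recurrence is the semi-infinite tridiagonal matrix with diagonal $(b_0,b_1,\dots)$, superdiagonal entries $1$ and subdiagonal $(a_1,a_2,\dots)$. Associated polynomials of the first kind: monic, $xP^{(1)}_n=P^{(1)}_{n+1}+b_{n+1}P^{(1)}_n+a_{n+1}P^{(1)}_{n-1}$, $P^{(1)}_{-1}=0,P^{(1)}_0=1$. $\langle(x-c)\mathbf{u},p\rangle=\langle\mathbf{u},(x-c)p\rangle$, $\widetilde{\mathbf{u}}_0=\langle\widetilde{\mathbf{u}},1\rangle$. *)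

theory Defs
  imports "HOL-Computational_Algebra.Polynomial" "Jordan_Normal_Form.Determinant"
begin

definition mfun :: "(nat \<Rightarrow> complex) \<Rightarrow> complex poly \<Rightarrow> complex" where
  "mfun m p = (\<Sum>k\<le>degree p. coeff p k * m k)"

definition quasi_definite :: "(nat \<Rightarrow> complex) \<Rightarrow> bool" where
  "quasi_definite m \<longleftrightarrow> (\<forall>n. det (mat (n+1) (n+1) (\<lambda>(i,j). m (i+j))) \<noteq> 0)"

definition is_smop :: "(complex poly \<Rightarrow> complex) \<Rightarrow> (nat \<Rightarrow> complex poly) \<Rightarrow> bool" where
  "is_smop U P \<longleftrightarrow>
     (\<forall>n. degree (P n) = n \<and> lead_coeff (P n) = 1) \<and>
     (\<forall>n k. n \<noteq> k \<longrightarrow> U (P n * P k) = 0) \<and>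
     (\<forall>n. U (P n * P n) \<noteq> 0)"

definition three_term :: "(nat \<Rightarrow> complex poly) \<Rightarrow> (nat \<Rightarrow> complex) \<Rightarrow> (nat \<Rightarrow> complex) \<Rightarrow> bool" where
  "three_term R b a \<longleftrightarrow> R 0 = 1 \<and>
     (\<forall>n. [:0,1:] * R n = R (Suc n) + smult (b n) (R n)
                           + (if n = 0 then 0 else smult (a n) (R (n - 1))))"

fun orth_rec :: "(nat \<Rightarrow> complex) \<Rightarrow> (nat \<Rightarrow> complex) \<Rightarrow> nat \<Rightarrow> complex poly" where
  "orth_rec b a 0 = 1"
| "orth_rec b a (Suc 0) = [:- b 0, 1:]"
| "orth_rec b a (Suc (Suc n)) =
     [:- b (Suc n), 1:] * orth_rec b a (Suc n) - smult (a (Suc n)) (orth_rec b a n)"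

definition assoc1 :: "(nat \<Rightarrow> complex) \<Rightarrow> (nat \<Rightarrow> complex) \<Rightarrow> nat \<Rightarrow> complex poly" where
  "assoc1 b a = orth_rec (\<lambda>n. b (Suc n)) (\<lambda>n. a (Suc n))"

type_synonym imat = "nat \<Rightarrow> nat \<Rightarrow> complex"

definition monic_jacobi :: "(nat \<Rightarrow> complex) \<Rightarrow> (nat \<Rightarrow> complex) \<Rightarrow> imat" where
  "monic_jacobi b a i j =
     (if i = j then b i else if j = Suc i then 1 else if i = Suc j then a i else 0)"

definition monic_jacobi_of :: "(nat \<Rightarrow> complex poly) \<Rightarrow> imat \<Rightarrow> bool" where
  "monic_jacobi_of R J \<longleftrightarrow> (\<exists>b a. three_term R b a \<and> J = monic_jacobi b a)"

definition imat_mult :: "imat \<Rightarrow> imat \<Rightarrow> imat" where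
  "imat_mult A B i j = (\<Sum>k. A i k * B k j)"

definition minus_cI :: "imat \<Rightarrow> complex \<Rightarrow> imat" where
  "minus_cI J c i j = J i j - (if i = j then c else 0)"

definition lbidiag :: "(nat \<Rightarrow> complex) \<Rightarrow> imat" where
  "lbidiag s i j = (if i = j then 1 else if i = Suc j then s i else 0)"

definition ubidiag :: "(nat \<Rightarrow> complex) \<Rightarrow> imat" where
  "ubidiag d i j = (if i = j then d i else if j = Suc i then 1 else 0)"

definition lu_beta :: "(nat \<Rightarrow> complex poly) \<Rightarrow> complex \<Rightarrow> nat \<Rightarrow> complex" where
  "lu_beta P c n = - poly (P (Suc n)) c / poly (P n) c"

definition lu_ell :: "(nat \<Rightarrow> complex poly) \<Rightarrow> (nat \<Rightarrow> complex) \<Rightarrow> complex \<Rightarrow> nat \<Rightarrow> complex" where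
  "lu_ell P a c n = - a n * poly (P (n - 1)) c / poly (P n) c"

end

theory Submission imports Defs begin

lemma pe: "(\<And>z. poly p z = poly q z) \<Longrightarrow> p = (q::complex poly)"
  using poly_eq_poly_eq_iff by blast

lemma orth_rec_tt: "three_term (orth_rec b a) b a"
  unfolding three_term_def
proof (intro conjI allI)
  fix n show "[:0,1:] * orth_rec b a n = orth_rec b a (Suc n) + smult (b n) (orth_rec b a n)
       + (if n = 0 then 0 else smult (a n) (orth_rec b a (n - 1)))"
    by (cases n) (auto intro!: pe simp: algebra_simps)
qed simp

lemma mfun_upto: "degree p \<le> N \<Longrightarrow> mfun m p = (\<Sum>k\<le>N. coeff p k * m k)"
  unfolding mfun_def by (rule sum.mono_neutral_left) (auto simp: coeff_eq_0)

definition lin :: "(complex poly \<Rightarrow> complex) \<Rightarrow> bool" where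
  "lin U \<longleftrightarrow> (\<forall>p q. U (p+q) = U p + U q) \<and> (\<forall>s p. U (smult s p) = s * U p)"

lemma lin_mfun: "lin (mfun m)"
  unfolding lin_def
proof (intro conjI allI)
  fix p q :: "complex poly"
  let ?N = "max (degree p) (degree q)"
  have "mfun m (p+q) = (\<Sum>k\<le>?N. coeff (p+q) k * m k)"
    by (rule mfun_upto) (meson degree_add_le max.cobounded1 max.cobounded2)
  also have "\<dots> = (\<Sum>k\<le>?N. coeff p k * m k) + (\<Sum>k\<le>?N. coeff q k * m k)"
    by (simp add: algebra_simps sum.distrib)
  also have "\<dots> = mfun m p + mfun m q"
    by (simp add: mfun_upto[of p ?N] mfun_upto[of q ?N])
  finally show "mfun m (p+q) = mfun m p + mfun m q" .
next
  fix s p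
  have "mfun m (smult s p) = (\<Sum>k\<le>degree p. coeff (smult s p) k * m k)"
    by (rule mfun_upto) simp
  also have "\<dots> = s * mfun m p" by (simp add: mfun_def sum_distrib_left mult.assoc)
  finally show "mfun m (smult s p) = s * mfun m p" .
qed

lemma lin_add: "lin U \<Longrightarrow> U (p+q) = U p + U q" by (simp add: lin_def)
lemma lin_smult: "lin U \<Longrightarrow> U (smult s p) = s * U p" by (simp add: lin_def)
lemma lin_0: "lin U \<Longrightarrow> U 0 = 0" using lin_smult[of U 0 0] by simp
lemma lin_diff: "lin U \<Longrightarrow> U (p-q) = U p - U q"
  using lin_add[of U "p-q" q] by simp

lemma lin_shift: "lin U \<Longrightarrow> lin (\<lambda>p. U (r * p))"
  unfolding lin_def by (simp add: distrib_left)

lemma deg_diff_less: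
  fixes p q :: "complex poly"
  assumes "degree p = d" "degree q \<le> d" "coeff p d = coeff q d" "p - q \<noteq> 0"
  shows "degree (p - q) < d"
proof -
  have le: "degree (p - q) \<le> d" using assms degree_diff_le by (metis order_refl)
  have "coeff (p - q) d = 0" using assms by simp
  moreover have "coeff (p-q) (degree (p-q)) \<noteq> 0" using assms(4) leading_coeff_neq_0 by blast
  ultimately show ?thesis using le le_neq_implies_less by metis
qed

lemma smop_P0: "is_smop U P \<Longrightarrow> degree (P n) = n \<and> coeff (P n) n = 1"
  by (metis is_smop_def)

lemma orth_low:
  assumes S: "is_smop U P" and L: "lin U"
  shows "degree q < n \<Longrightarrow> U (P n * q) = 0"
proof (induction "degree q" arbitrary: q rule: less_induct)
  case less
  define d where "d = degree q"
  define r where "r = q - smult (lead_coeff q) (P d)"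
  have dP: "degree (P d) = d" "coeff (P d) d = 1" using smop_P0[OF S] by auto
  have qe: "P n * q = smult (lead_coeff q) (P n * P d) + P n * r"
    by (simp add: r_def algebra_simps)
  have z1: "U (P n * P d) = 0" using S less(2) unfolding is_smop_def d_def by auto
  have z2: "U (P n * r) = 0"
  proof (cases "r = 0")
    case True thus ?thesis using lin_0[OF L] by simp
  next
    case False
    have "degree r < d" unfolding r_def
      by (rule deg_diff_less) (use dP False r_def d_def in auto)
    thus ?thesis using less d_def by auto
  qed
  show ?case using qe z1 z2 lin_add[OF L] lin_smult[OF L] by simp
qed

lemma orth_lead:
  assumes S: "is_smop U P" and L: "lin U"
  shows "U (P (degree q) * q) = lead_coeff q * U (P (degree q) * P (degree q))"
proof -
  define d where "d = degree q"
  define r where "r = q - smult (lead_coeff q) (P d)"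
  have dP: "degree (P d) = d" "coeff (P d) d = 1" using smop_P0[OF S] by auto
  have qe: "P d * q = smult (lead_coeff q) (P d * P d) + P d * r"
    by (simp add: r_def algebra_simps)
  have z2: "U (P d * r) = 0"
  proof (cases "r = 0")
    case True thus ?thesis using lin_0[OF L] by simp
  next
    case False
    have "degree r < d" unfolding r_def
      by (rule deg_diff_less) (use dP False r_def d_def in auto)
    thus ?thesis using orth_low[OF S L] by auto
  qed
  show ?thesis using qe z2 lin_add[OF L] lin_smult[OF L] d_def by simp
qed

lemma LU_entry: "imat_mult (lbidiag s) (ubidiag d) i j =
  (if i = j then d i + (if i = 0 then 0 else s i) else if j = Suc i then 1
   else if i = Suc j then s i * d j else 0)"
proof (cases i)
  case 0
  have "imat_mult (lbidiag s) (ubidiag d) i j = (\<Sum>k\<in>{0}. lbidiag s i k * ubidiag d k j)"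
    unfolding imat_mult_def by (rule suminf_finite) (auto simp: lbidiag_def 0)
  thus ?thesis by (simp add: 0 lbidiag_def ubidiag_def)
next
  case (Suc i')
  have "imat_mult (lbidiag s) (ubidiag d) i j = (\<Sum>k\<in>{i', Suc i'}. lbidiag s i k * ubidiag d k j)"
    unfolding imat_mult_def by (rule suminf_finite) (auto simp: lbidiag_def Suc)
  thus ?thesis by (auto simp: Suc lbidiag_def ubidiag_def)
qed

lemma UL_entry: "imat_mult (ubidiag d) (lbidiag s) i j =
  (if i = j then d i + s (Suc i) else if j = Suc i then 1
   else if i = Suc j then d i * s i else 0)"
proof -
  have "imat_mult (ubidiag d) (lbidiag s) i j = (\<Sum>k\<in>{i, Suc i}. ubidiag d i k * lbidiag s k j)"
    unfolding imat_mult_def by (rule suminf_finite) (auto simp: ubidiag_def)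
  thus ?thesis by (auto simp: lbidiag_def ubidiag_def)
qed


lemma Xmul:
  fixes T :: "complex poly"
  assumes "degree T = n" "coeff T n = 1"
  shows "degree ([:-c,1:] * T) = Suc n \<and> coeff ([:-c,1:] * T) (Suc n) = 1"
proof -
  have "T \<noteq> 0" using assms by auto
  have e: "degree ([:-c,1:]*T) = degree [:-c,1:] + degree T"
    by (rule degree_mult_eq) (use \<open>T\<noteq>0\<close> in auto)
  hence d: "degree ([:-c,1:] * T) = Suc n" using assms by simp
  have "lead_coeff ([:-c,1:] * T) = lead_coeff [:-c,1:] * lead_coeff T" by (rule lead_coeff_mult)
  thus ?thesis using d assms by simp
qed

lemma Xdiv:
  fixes T Q :: "complex poly"
  assumes "[:-c,1:] * T = Q" "degree Q = Suc n" "coeff Q (Suc n) = 1"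
  shows "degree T = n \<and> coeff T n = 1"
proof -
  have "T \<noteq> 0" using assms by auto
  have e: "degree ([:-c,1:]*T) = degree [:-c,1:] + degree T"
    by (rule degree_mult_eq) (use \<open>T\<noteq>0\<close> in auto)
  hence d: "degree T = n" using assms by simp
  have "lead_coeff Q = lead_coeff T" unfolding assms(1)[symmetric]
    by (simp only: lead_coeff_mult) simp
  thus ?thesis using d assms(2,3) by simp
qed


theorem mainTheorem12:
  fixes m :: "nat \<Rightarrow> complex" and P :: "nat \<Rightarrow> complex poly"
    and b a :: "nat \<Rightarrow> complex" and c :: complex
  assumes qd: "quasi_definite m"
    and smop: "is_smop (mfun m) P"
    and rec: "three_term P b a"
    and nz: "\<forall>n. poly (P n) c \<noteq> 0"
  defines "ut \<equiv> \<lambda>p. mfun m ([:- c, 1:] * p)"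
    and "R \<equiv> \<lambda>n. smult (mfun m 1 / mfun m [:- c, 1:]) ([:- c, 1:] * assoc1 b a n - P (Suc n))"
    and "L1 \<equiv> lbidiag (\<lambda>i. lu_ell P a c (Suc i))"
    and "U1 \<equiv> ubidiag (\<lambda>i. lu_beta P c (Suc i))"
  shows "(\<exists>J\<alpha>. monic_jacobi_of R J\<alpha> \<and> minus_cI J\<alpha> c = imat_mult L1 U1)
       \<and> (\<exists>Pt. is_smop ut Pt)
       \<and> (\<forall>Pt bt aa. is_smop ut Pt \<and> three_term Pt bt aa \<longrightarrow>
            (\<exists>Jt. monic_jacobi_of (assoc1 bt aa) Jt \<and> minus_cI Jt c = imat_mult U1 L1))"
proof -
  define X where "X = [:-c, 1:]"
  define pc where "pc n = poly (P n) c" for n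
  define bb where "bb = lu_beta P c"
  define ll where "ll = lu_ell P a c"
  have L: "lin (mfun m)" by (rule lin_mfun)
  have pcnz: "pc n \<noteq> 0" for n using nz pc_def by auto
  have P0: "P 0 = 1" using rec three_term_def by blast
  have PR: "[:0,1:] * P n = P (Suc n) + smult (b n) (P n)
      + (if n = 0 then 0 else smult (a n) (P (n - 1)))" for n
    using rec three_term_def by blast
  have PRc: "c * pc n = pc (Suc n) + b n * pc n + (if n = 0 then 0 else a n * pc (n - 1))" for n
    using arg_cong[OF PR[of n], of "\<lambda>p. poly p c"] by (simp add: pc_def)
  have pc0: "pc 0 = 1" using P0 pc_def by simp
  have S1: "b n = c + bb n + (if n = 0 then 0 else ll n)" for n
  proof -
    have "b n * pc n = c * pc n - pc (Suc n) - (if n = 0 then 0 else a n * pc (n - 1))"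
      using PRc[of n] by (simp add: algebra_simps)
    moreover have "(c + bb n + (if n = 0 then 0 else ll n)) * pc n
       = c * pc n - pc (Suc n) - (if n = 0 then 0 else a n * pc (n - 1))"
      using pcnz[of n]
      by (simp add: bb_def ll_def lu_beta_def lu_ell_def pc_def[symmetric] field_simps)
    ultimately show ?thesis using pcnz[of n] by (metis mult_right_cancel)
  qed
  have S2: "a (Suc n) = ll (Suc n) * bb n" for n
    using pcnz[of n] pcnz[of "Suc n"]
    by (simp add: bb_def ll_def lu_beta_def lu_ell_def pc_def[symmetric] field_simps)
  have bbnz: "bb n \<noteq> 0" for n
    using pcnz[of n] pcnz[of "Suc n"] by (simp add: bb_def lu_beta_def pc_def[symmetric])
  have L1e: "L1 = lbidiag (\<lambda>i. ll (Suc i))" and U1e: "U1 = ubidiag (\<lambda>i. bb (Suc i))"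
    by (simp_all add: L1_def U1_def ll_def bb_def)
  have m1: "mfun m 1 = m 0" by (simp add: mfun_def)
  have mX: "mfun m X = m 1 - c * m 0" by (simp add: mfun_def X_def)
  have "[:0,1:] = P 1 + [:b 0:]" using PR[of 0] P0 by simp
  hence "P 1 = [:0,1:] - [:b 0:]" by (simp add: eq_diff_eq)
  hence P1: "P 1 = [:- b 0, 1:]" by simp
  have "mfun m (P 1 * P 0) = 0" using smop unfolding is_smop_def by auto
  hence mb: "m 1 - b 0 * m 0 = 0" using P1 P0 by (simp add: mfun_def)
  have "mfun m (P 0 * P 0) \<noteq> 0" using smop unfolding is_smop_def by auto
  hence m0: "m 0 \<noteq> 0" using P0 m1 by simp
  have pc1: "pc 1 = c - b 0" using P1 pc_def by simp
  define K where "K = mfun m 1 / mfun m X"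
  have Kv: "K = - 1 / pc 1"
    using m0 pcnz[of 1] unfolding K_def m1 mX pc1
    using mb by (simp add: field_simps)
  define A where "A = assoc1 b a"
  have AR: "[:0,1:] * A n = A (Suc n) + smult (b (Suc n)) (A n)
      + (if n = 0 then 0 else smult (a (Suc n)) (A (n - 1)))" for n
    using orth_rec_tt[of "\<lambda>n. b (Suc n)" "\<lambda>n. a (Suc n)"] unfolding three_term_def A_def assoc1_def
    by blast
  have A0: "A 0 = 1" by (simp add: A_def assoc1_def)
  define Q where "Q n = X * A n - P (Suc n)" for n
  have Re: "R n = smult K (Q n)" for n by (simp add: R_def K_def Q_def X_def A_def)
  have QR: "[:0,1:] * Q n = Q (Suc n) + smult (b (Suc n)) (Q n)
      + (if n = 0 then - [:a 1:] else smult (a (Suc n)) (Q (n - 1)))" for n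
  proof -
    have e1: "[:0,1:] * A n - (A (Suc n) + smult (b (Suc n)) (A n)
      + (if n = 0 then 0 else smult (a (Suc n)) (A (n - 1)))) = 0" using AR by simp
    have e2: "[:0,1:] * P (Suc n) - (P (Suc (Suc n)) + smult (b (Suc n)) (P (Suc n))
      + smult (a (Suc n)) (P n)) = 0" using PR[of "Suc n"] by simp
    have "[:0,1:] * Q n - (Q (Suc n) + smult (b (Suc n)) (Q n)
      + (if n = 0 then - [:a 1:] else smult (a (Suc n)) (Q (n - 1))))
      = X * ([:0,1:] * A n - (A (Suc n) + smult (b (Suc n)) (A n)
      + (if n = 0 then 0 else smult (a (Suc n)) (A (n - 1)))))
      - ([:0,1:] * P (Suc n) - (P (Suc (Suc n)) + smult (b (Suc n)) (P (Suc n))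
      + smult (a (Suc n)) (P n)))"
      by (cases n) (auto intro!: pe simp: Q_def P0 algebra_simps)
    thus ?thesis using e1 e2 by simp
  qed
  have Q0: "Q 0 = [:b 0 - c:]" using P1 by (simp add: Q_def A0 X_def)
  have "K * (b 0 - c) = - K * pc 1" using pc1 by (simp add: right_diff_distrib)
  also have "\<dots> = 1" using Kv pcnz[of 1] by simp
  finally have Kb: "K * (b 0 - c) = 1" .
  have R0: "R 0 = 1" using Kb by (simp add: Re Q0 one_pCons)
  define bal where "bal n = (if n = 0 then b 1 - a 1 * K else b (Suc n))" for n
  define aal where "aal n = a (Suc n)" for n
  have RR: "three_term R bal aal"
    unfolding three_term_def
  proof (intro conjI allI)
    show "R 0 = 1" by (rule R0)
    fix n
    show "[:0,1:] * R n = R (Suc n) + smult (bal n) (R n)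
      + (if n = 0 then 0 else smult (aal n) (R (n - 1)))"
    proof (cases n)
      case 0
      have "[:0,1:] * R n = smult K ([:0,1:] * Q 0)" by (simp add: Re 0)
      also have "\<dots> = R 1 + smult (b 1) (R 0) - [:K * a 1:]"
        using QR[of 0] by (simp add: Re smult_add_right mult.commute)
      also have "\<dots> = R (Suc n) + smult (bal n) (R n)
      + (if n = 0 then 0 else smult (aal n) (R (n - 1)))"
        by (auto simp: 0 R0 bal_def intro!: pe simp: algebra_simps)
      finally show ?thesis .
    next
      case (Suc k)
      have "[:0,1:] * R n = smult K ([:0,1:] * Q n)" by (simp add: Re)
      also have "\<dots> = R (Suc n) + smult (bal n) (R n)
      + (if n = 0 then 0 else smult (aal n) (R (n - 1)))"
        using QR[of n] by (simp add: Re Suc bal_def aal_def smult_add_right algebra_simps)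
      finally show ?thesis .
    qed
  qed
  have part1: "\<exists>J\<alpha>. monic_jacobi_of R J\<alpha> \<and> minus_cI J\<alpha> c = imat_mult L1 U1"
  proof (intro exI conjI)
    show "monic_jacobi_of R (monic_jacobi bal aal)" using RR monic_jacobi_of_def by blast
    show "minus_cI (monic_jacobi bal aal) c = imat_mult L1 U1"
    proof (intro ext)
      fix i j
      have ell1: "ll 1 = - a 1 / pc 1"
        by (simp add: ll_def lu_ell_def pc_def[symmetric] pc0)
      have aK: "a 1 * K = ll 1" using ell1 Kv by simp
      show "minus_cI (monic_jacobi bal aal) c i j = imat_mult L1 U1 i j"
        unfolding L1e U1e LU_entry minus_cI_def monic_jacobi_def
        using S1[of "Suc i"] S2[of i] S1[of 1] aK
        by (auto simp: bal_def aal_def)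
    qed
  qed
  have ute: "ut = (\<lambda>p. mfun m (X * p))" by (simp add: ut_def X_def)
  have Lt: "lin ut" unfolding ute by (rule lin_shift[OF L])
  define Q' where "Q' n = P (Suc n) + smult (bb n) (P n)" for n
  have Q'c: "poly (Q' n) c = 0" for n
    using pcnz[of n] by (simp add: Q'_def bb_def lu_beta_def pc_def[symmetric])
  have degP: "degree (P n) = n" "coeff (P n) n = 1" for n using smop_P0[OF smop] by auto
  have Q'd: "degree (Q' n) = Suc n \<and> coeff (Q' n) (Suc n) = 1" for n
  proof -
    have "degree (smult (bb n) (P n)) < degree (P (Suc n))" using degP[of n] degP[of "Suc n"]
      by (simp add: le_less_trans[OF degree_smult_le])
    hence "degree (Q' n) = degree (P (Suc n))" unfolding Q'_def by (rule degree_add_eq_left)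
    moreover have "coeff (P n) (Suc n) = 0" using degP[of n] by (simp add: coeff_eq_0)
    ultimately show ?thesis using degP[of "Suc n"] by (simp add: Q'_def)
  qed
  have ortQ: "degree q < n \<Longrightarrow> mfun m (Q' n * q) = 0" for q n
  proof -
    assume "degree q < n"
    hence "mfun m (P (Suc n) * q) = 0" "mfun m (P n * q) = 0"
      using orth_low[OF smop L] by auto
    thus ?thesis unfolding Q'_def using lin_add[OF L] lin_smult[OF L]
      by (simp add: distrib_right)
  qed
  have normQ: "degree q = n \<Longrightarrow> coeff q n = 1 \<Longrightarrow> mfun m (Q' n * q) = bb n * mfun m (P n * P n)" for q n
  proof -
    assume q: "degree q = n" "coeff q n = 1"
    hence "mfun m (P (Suc n) * q) = 0"
      using orth_low[OF smop L] by auto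
    moreover have "mfun m (P n * q) = mfun m (P n * P n)"
      using orth_lead[OF smop L, of q] q by simp
    ultimately show ?thesis unfolding Q'_def using lin_add[OF L] lin_smult[OF L]
      by (simp add: distrib_right)
  qed
  have Pnorm: "mfun m (P n * P n) \<noteq> 0" for n using smop is_smop_def by blast
  have Xnz: "X \<noteq> 0" by (simp add: X_def)
  have smop_ut: "is_smop ut Pt"
    if H: "\<And>n. X * Pt n = Q' n" for Pt
  proof -
    have dPt: "degree (Pt n) = n \<and> coeff (Pt n) n = 1" for n
      using Xdiv[of c "Pt n" "Q' n" n] H[of n] Q'd[of n] by (simp add: X_def)
    have utQ: "ut (Pt n * q) = mfun m (Q' n * q)" for n q
      unfolding ute using H[of n] by (simp add: mult.assoc[symmetric])
    have o: "ut (Pt n * Pt k) = 0" if "k < n" for n k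
      using utQ ortQ dPt that by simp
    show ?thesis unfolding is_smop_def
    proof (intro conjI allI impI)
      fix n show "degree (Pt n) = n" "lead_coeff (Pt n) = 1" using dPt by auto
      show "ut (Pt n * Pt n) \<noteq> 0" using utQ normQ[of "Pt n" n] dPt[of n] bbnz[of n] Pnorm[of n] by simp
    next
      fix n k :: nat assume "n \<noteq> k"
      thus "ut (Pt n * Pt k) = 0" using o[of k n] o[of n k]
        by (cases "k < n") (auto simp: mult.commute)
    qed
  qed
  have part2: "\<exists>Pt. is_smop ut Pt"
  proof
    define Pt0 where "Pt0 n = Q' n div X" for n
    have "X dvd Q' n" for n using Q'c poly_eq_0_iff_dvd X_def by blast
    hence "X * Pt0 n = Q' n" for n by (simp add: Pt0_def)
    thus "is_smop ut Pt0" by (rule smop_ut)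
  qed
  define btp where "btp n = c + bb n + ll (Suc n)" for n
  define aap where "aap n = bb n * ll n" for n
  define e where "e k = [:0,1:] * P k - (P (Suc k) + smult (b k) (P k)
      + (if k = 0 then 0 else smult (a k) (P (k - 1))))" for k
  have e0: "e k = 0" for k using PR[of k] by (simp add: e_def)
  have Q'R: "[:0,1:] * Q' n = Q' (Suc n) + smult (btp n) (Q' n)
      + (if n = 0 then 0 else smult (aap n) (Q' (n - 1)))" for n
  proof -
    define k1 where "k1 = b (Suc n) + bb n - bb (Suc n) - btp n"
    define k2 where "k2 = a (Suc n) + bb n * b n - btp n * bb n - (if n = 0 then 0 else aap n)"
    define k3 where "k3 = bb n * a n - aap n * bb (n - 1)"
    have "[:0,1:] * Q' n - (Q' (Suc n) + smult (btp n) (Q' n)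
      + (if n = 0 then 0 else smult (aap n) (Q' (n - 1))))
      = e (Suc n) + smult (bb n) (e n) + smult k1 (P (Suc n)) + smult k2 (P n)
        + (if n = 0 then 0 else smult k3 (P (n - 1)))"
      by (cases n) (auto intro!: pe simp: e_def Q'_def k1_def k2_def k3_def algebra_simps)
    moreover have "k1 = 0" using S1[of "Suc n"] by (simp add: k1_def btp_def)
    moreover have "k2 = 0" using S1[of n] S2[of n]
      by (simp add: k2_def btp_def aap_def algebra_simps)
    moreover have "n \<noteq> 0 \<Longrightarrow> k3 = 0" using S2[of "n - 1"]
      by (cases n) (simp_all add: k3_def aap_def)
    ultimately show ?thesis using e0 by (cases "n = 0") auto
  qed
  have part3: "is_smop ut Pt \<and> three_term Pt bt aa \<longrightarrow>
            (\<exists>Jt. monic_jacobi_of (assoc1 bt aa) Jt \<and> minus_cI Jt c = imat_mult U1 L1)"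
    for Pt bt aa
  proof
    assume H: "is_smop ut Pt \<and> three_term Pt bt aa"
    hence Hs: "is_smop ut Pt" and Ht: "three_term Pt bt aa" by auto
    have dPt: "degree (Pt n) = n" "coeff (Pt n) n = 1" for n using smop_P0[OF Hs] by auto
    have K1: "X * Pt n = Q' n" for n
    proof -
      have XP: "degree (X * Pt n) = Suc n \<and> coeff (X * Pt n) (Suc n) = 1"
        using Xmul[OF dPt] X_def by simp
      define D where "D = X * Pt n - Q' n"
      have degD: "degree D \<le> n"
      proof (cases "D = 0")
        case False
        have "degree D < Suc n" unfolding D_def
          by (rule deg_diff_less) (use XP Q'd[of n] False D_def in auto)
        thus ?thesis by simp
      qed simp
      define g where "g = coeff D n"
      define E where "E = D - smult g (P n)"
      have E0: "E = 0"
      proof (rule ccontr)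
        assume Enz: "E \<noteq> 0"
        have "degree E \<le> n" unfolding E_def using degD degP[of n]
          by (intro degree_diff_le) (auto intro: order_trans[OF degree_smult_le])
        moreover have "coeff E n = 0" by (simp add: E_def g_def degP)
        moreover have "coeff E (degree E) \<noteq> 0" using Enz by simp
        ultimately have dE: "degree E < n" by (metis le_neq_implies_less)
        define d where "d = degree E"
        have "mfun m (P d * E) = lead_coeff E * mfun m (P d * P d)"
          unfolding d_def by (rule orth_lead[OF smop L])
        hence nz1: "mfun m (P d * E) \<noteq> 0" using Enz Pnorm by (simp add: d_def)
        have z1: "mfun m (P d * P n) = 0" using smop dE unfolding is_smop_def d_def by auto
        have z2: "ut (Pt n * P d) = 0" using orth_low[OF Hs Lt] dE degP d_def by simp
        have z3: "mfun m (Q' n * P d) = 0" using ortQ dE degP d_def by simp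
        have "mfun m (P d * E) = ut (Pt n * P d) - mfun m (Q' n * P d) - g * mfun m (P d * P n)"
        proof -
          have "P d * E = (X * (Pt n * P d) - Q' n * P d) - smult g (P d * P n)"
            by (simp add: E_def D_def algebra_simps)
          thus ?thesis unfolding ute by (simp only: lin_diff[OF L] lin_smult[OF L])
        qed
        thus False using nz1 z1 z2 z3 by simp
      qed
      hence "D = smult g (P n)" by (simp add: E_def)
      moreover have "poly D c = 0" using Q'c by (simp add: D_def X_def)
      ultimately have "g = 0" using pcnz[of n] by (simp add: pc_def)
      hence "D = 0" using \<open>D = smult g (P n)\<close> by simp
      thus ?thesis by (simp add: D_def)
    qed
    have PtR: "[:0,1:] * Pt n = Pt (Suc n) + smult (bt n) (Pt n)
      + (if n = 0 then 0 else smult (aa n) (Pt (n - 1)))" for n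
      using Ht three_term_def by blast
    have PtR2: "[:0,1:] * Pt n = Pt (Suc n) + smult (btp n) (Pt n)
      + (if n = 0 then 0 else smult (aap n) (Pt (n - 1)))" for n
    proof -
      have "X * ([:0,1:] * Pt n) = X * (Pt (Suc n) + smult (btp n) (Pt n)
        + (if n = 0 then 0 else smult (aap n) (Pt (n - 1))))"
        using Q'R[of n] K1 by (simp add: algebra_simps mult.left_commute[of X])
      thus ?thesis using mult_left_cancel[OF Xnz] by blast
    qed
    have btv: "bt n = btp n" and aav: "n \<noteq> 0 \<Longrightarrow> aa n = aap n" for n
    proof -
      have W: "smult (bt n - btp n) (Pt n) + (if n = 0 then 0 else smult (aa n - aap n) (Pt (n - 1))) = 0"
        using PtR[of n] PtR2[of n] by (cases "n = 0") (auto simp: smult_diff_left algebra_simps)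
      have "coeff (Pt (n - 1)) n = 0" if "n \<noteq> 0" using dPt[of "n - 1"] that
        by (simp add: coeff_eq_0)
      hence "coeff (smult (bt n - btp n) (Pt n) + (if n = 0 then 0 else smult (aa n - aap n) (Pt (n - 1)))) n
        = bt n - btp n" using dPt[of n] by auto
      with W show b1: "bt n = btp n" by simp
      assume "n \<noteq> 0"
      with W b1 have "smult (aa n - aap n) (Pt (n - 1)) = 0" by simp
      moreover have "Pt (n - 1) \<noteq> 0" using dPt[of "n - 1"] by auto
      ultimately show "aa n = aap n" by simp
    qed
    show "\<exists>Jt. monic_jacobi_of (assoc1 bt aa) Jt \<and> minus_cI Jt c = imat_mult U1 L1"
    proof (intro exI conjI)
      show "monic_jacobi_of (assoc1 bt aa) (monic_jacobi (\<lambda>n. bt (Suc n)) (\<lambda>n. aa (Suc n)))"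
        unfolding monic_jacobi_of_def assoc1_def using orth_rec_tt by blast
      show "minus_cI (monic_jacobi (\<lambda>n. bt (Suc n)) (\<lambda>n. aa (Suc n))) c = imat_mult U1 L1"
      proof (intro ext)
        fix i j
        show "minus_cI (monic_jacobi (\<lambda>n. bt (Suc n)) (\<lambda>n. aa (Suc n))) c i j = imat_mult U1 L1 i j"
          unfolding L1e U1e UL_entry minus_cI_def monic_jacobi_def
          using btv[of "Suc i"] aav[of "Suc i"]
          by (auto simp: btp_def aap_def mult.commute)
      qed
    qed
  qed
  show ?thesis using part1 part2 part3 by blast
qed

end
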